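(* Let $X$ be a finite set with $|X|\ge2$, let $X_r$ be a disjoint copy of $X$, and regard $\bar{\mathcal{B}}(X)=\bar{\mathcal{B}}(X,X_r)$. A collection $\mathcal{S}$ of directed partial splits of $X$ is compatible if and only if $\{T_S:S\in\mathcal{S}\}$ is a compatible system of splits of $\bar{\mathcal{B}}(X)$.
   Context: A directed partial split of $X$ is an ordered pair $(A,B)$ of non-empty disjoint subsets of $X$. Two directed partial splits $(A,B),(C,D)$ are compatible if one of: $A\subseteq C$ and $B\supseteq D$; $A\subseteq X\setminus C$ and $B\supseteq X\setminus D$; $A\supseteq C$ and $B\subseteq D$; $A\supseteq X\setminus C$ and $B\subseteq X\setminus D$. A set of directed partial splits is compatible if its elements are pairwise compatible. $\bar{\mathcal{B}}(X,X_r)=\{e_x+e_{y'}:x\in X,y'\in X_r\}\subseteq\mathbb{R}^{X\cup X_r}$. For $S=(A,B)$, $T_S$ is the split of $\bar{\mathcal{B}}(X)$ with split hyperplane $\sum_{i\in A}f(i)=\sum_{j\in B'}f(j)$, where $B'\subseteq X_r$ is the copy of $B$. A split of a point configuration $\mathcal{A}$ is given by an affine hyperplane in the affine hull of $\mathcal{A}$ meeting the relative interior of $\operatorname{conv}\mathcal{A}$ and not strictly separating the endpoints of any edge of $\mathcal{A}$; a set of splits is compatible if for any two of them the intersection of their hyperplanes does not meet the relative interior of $\operatorname{conv}\mathcal{A}$. *)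

theory Defs
  imports "HOL-Analysis.Analysis"
begin

text \<open>The ground set X is modelled as UNIV of a finite type 'a; the disjoint copy X_r
  is realised via the sum type: coordinate Inl x is x in X, coordinate Inr x is x' in X_r.\<close>

definition dir_partial_split :: "('a set \<times> 'a set) \<Rightarrow> bool" where
  "dir_partial_split S \<longleftrightarrow> fst S \<noteq> {} \<and> snd S \<noteq> {} \<and> fst S \<inter> snd S = {}"

definition dps_compatible :: "('a set \<times> 'a set) \<Rightarrow> ('a set \<times> 'a set) \<Rightarrow> bool" where
  "dps_compatible S T \<longleftrightarrow>
     (let A = fst S; B = snd S; C = fst T; D = snd T in
       (A \<subseteq> C \<and> B \<supseteq> D) \<or> (A \<subseteq> UNIV - C \<and> B \<supseteq> UNIV - D) \<or>
       (A \<supseteq> C \<and> B \<subseteq> D) \<or> (A \<supseteq> UNIV - C \<and> B \<subseteq> UNIV - D))"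

definition dps_set_compatible :: "('a set \<times> 'a set) set \<Rightarrow> bool" where
  "dps_set_compatible SS \<longleftrightarrow> (\<forall>S\<in>SS. \<forall>T\<in>SS. dps_compatible S T)"

definition Bbar :: "(real ^ ('a::finite + 'a)) set" where
  "Bbar = {axis (Inl x) 1 + axis (Inr y) 1 | x y. True}"

definition is_edge :: "'v::euclidean_space set \<Rightarrow> 'v \<Rightarrow> 'v \<Rightarrow> bool" where
  "is_edge P p q \<longleftrightarrow> p \<noteq> q \<and> closed_segment p q face_of convex hull P"

definition is_split :: "'v::euclidean_space set \<Rightarrow> 'v set \<Rightarrow> bool" where
  "is_split P H \<longleftrightarrow>
     (\<exists>a b. H = {x \<in> affine hull P. a \<bullet> x = b} \<and> H \<noteq> affine hull P \<and>
        H \<inter> rel_interior (convex hull P) \<noteq> {} \<and>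
        (\<forall>p q. is_edge P p q \<longrightarrow> \<not> (a \<bullet> p < b \<and> b < a \<bullet> q)))"

definition compatible_split_system :: "'v::euclidean_space set \<Rightarrow> 'v set set \<Rightarrow> bool" where
  "compatible_split_system P \<Sigma> \<longleftrightarrow>
     (\<forall>H\<in>\<Sigma>. is_split P H) \<and>
     (\<forall>H1\<in>\<Sigma>. \<forall>H2\<in>\<Sigma>. H1 \<noteq> H2 \<longrightarrow> H1 \<inter> H2 \<inter> rel_interior (convex hull P) = {})"

definition T_split :: "('a::finite set \<times> 'a set) \<Rightarrow> (real ^ ('a + 'a)) set" where
  "T_split S = {f \<in> affine hull (Bbar :: (real ^ ('a + 'a)) set).
                  (\<Sum>i\<in>fst S. f $ Inl i) = (\<Sum>j\<in>snd S. f $ Inr j)}"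

end

theory Submission
  imports Defs
begin


definition pt :: "'a::finite \<Rightarrow> 'a \<Rightarrow> real ^ ('a + 'a)" where
  "pt x y = axis (Inl x) 1 + axis (Inr y) 1"

definition sl :: "'a::finite set \<Rightarrow> real ^ ('a + 'a) \<Rightarrow> real" where
  "sl A g = (\<Sum>i\<in>A. g $ Inl i)"
definition sr :: "'a::finite set \<Rightarrow> real ^ ('a + 'a) \<Rightarrow> real" where
  "sr A g = (\<Sum>i\<in>A. g $ Inr i)"

lemma pt_nth: "pt x y $ k = (if k = Inl x \<or> k = Inr y then 1 else 0)"
  by (auto simp: pt_def axis_def)

lemma sl_pt: "sl A (pt x y) = (if x \<in> A then 1 else 0)"
  unfolding sl_def pt_nth by (simp add: sum.If_cases)
lemma sr_pt: "sr A (pt x y) = (if y \<in> A then 1 else 0)"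
  unfolding sr_def pt_nth by (simp add: sum.If_cases)

lemma Bbar_pt: "Bbar = range (case_prod pt)"
  unfolding Bbar_def pt_def by (auto simp: image_iff)

lemma sl_lin: "sl A (u *\<^sub>R x + v *\<^sub>R y) = u * sl A x + v * sl A y"
  by (simp add: sl_def sum.distrib sum_distrib_left)
lemma sr_lin: "sr A (u *\<^sub>R x + v *\<^sub>R y) = u * sr A x + v * sr A y"
  by (simp add: sr_def sum.distrib sum_distrib_left)

definition AFF :: "(real ^ ('a::finite + 'a)) set" where
  "AFF = {g. sl UNIV g = 1 \<and> sr UNIV g = 1}"

lemma affine_AFF: "affine AFF"
  unfolding affine_def AFF_def by (simp add: sl_lin sr_lin)

lemma aff_sub: "affine hull Bbar \<subseteq> AFF"
  apply (rule hull_minimal)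
  using affine_AFF by (auto simp: Bbar_pt AFF_def sl_pt sr_pt)

lemma convex_nonneg: "convex {g::real^'n. \<forall>k. 0 \<le> g $ k}"
  unfolding convex_def by auto

lemma conv_nonneg: "convex hull Bbar \<subseteq> {g. \<forall>k. 0 \<le> g $ k}"
  apply (rule hull_minimal)
  using convex_nonneg by (auto simp: Bbar_pt pt_nth)

lemma sl_compl: "sl (- A) g = sl UNIV g - sl A g"
proof -
  have "sl UNIV g = sl (A \<union> -A) g" by simp
  also have "\<dots> = sl A g + sl (-A) g" unfolding sl_def by (rule sum.union_disjoint) auto
  finally show ?thesis by simp
qed
lemma sr_compl: "sr (- A) g = sr UNIV g - sr A g"
proof -
  have "sr UNIV g = sr (A \<union> -A) g" by simp
  also have "\<dots> = sr A g + sr (-A) g" unfolding sr_def by (rule sum.union_disjoint) auto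
  finally show ?thesis by simp
qed

lemma sum_pairs: "(\<Sum>p\<in>(UNIV::('a::finite\<times>'b::finite) set). f (fst p) (snd p)) = (\<Sum>x\<in>UNIV. \<Sum>y\<in>UNIV. f x y)"
  unfolding sum.cartesian_product UNIV_Times_UNIV by (simp add: split_def)

lemma decomp:
  fixes g :: "real ^ ('a::finite + 'a)"
  assumes "g \<in> AFF"
  shows "g = (\<Sum>p\<in>UNIV. (g $ Inl (fst p) * g $ Inr (snd p)) *\<^sub>R pt (fst p) (snd p))"
proof -
  have L: "sl UNIV g = 1" and R: "sr UNIV g = 1" using assms by (auto simp: AFF_def)
  show ?thesis
  proof (subst vec_eq_iff, rule allI)
    fix k :: "'a + 'a"
    have "(\<Sum>p\<in>UNIV. (g $ Inl (fst p) * g $ Inr (snd p)) *\<^sub>R pt (fst p) (snd p)) $ k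
       = (\<Sum>p\<in>UNIV. (g $ Inl (fst p) * g $ Inr (snd p)) * pt (fst p) (snd p) $ k)"
      by (simp add: sum_component)
    also have "\<dots> = (\<Sum>x\<in>UNIV. \<Sum>y\<in>UNIV. (g $ Inl x * g $ Inr y) * pt x y $ k)"
      by (rule sum_pairs)
    also have "\<dots> = g $ k"
    proof (cases k)
      case (Inl a)
      have "(\<Sum>x\<in>UNIV. \<Sum>y\<in>UNIV. (g $ Inl x * g $ Inr y) * pt x y $ k)
          = (\<Sum>x\<in>UNIV. if a = x then (\<Sum>y\<in>UNIV. g $ Inl x * g $ Inr y) else 0)"
        by (rule sum.cong[OF refl]) (auto simp: Inl pt_nth)
      also have "\<dots> = g $ Inl a * sr UNIV g"
        by (simp add: sr_def sum_distrib_left)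
      finally show ?thesis using R Inl by simp
    next
      case (Inr a)
      have "(\<Sum>x\<in>UNIV. \<Sum>y\<in>UNIV. (g $ Inl x * g $ Inr y) * pt x y $ k)
          = (\<Sum>y\<in>UNIV. if a = y then (\<Sum>x\<in>UNIV. g $ Inl x * g $ Inr y) else 0)"
        by (subst sum.swap, rule sum.cong[OF refl]) (auto simp: Inr pt_nth)
      also have "\<dots> = sl UNIV g * g $ Inr a"
        by (simp add: sl_def sum_distrib_right)
      finally show ?thesis using L Inr by simp
    qed
    finally show "g $ k = (\<Sum>p\<in>UNIV. (g $ Inl (fst p) * g $ Inr (snd p)) *\<^sub>R pt (fst p) (snd p)) $ k" by simp
  qed
qed

lemma AFF_nonneg_conv:
  assumes "g \<in> AFF" "\<forall>k. 0 \<le> g $ k"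
  shows "g \<in> convex hull Bbar"
proof -
  have L: "sl UNIV g = 1" and R: "sr UNIV g = 1" using assms by (auto simp: AFF_def)
  have "(\<Sum>p\<in>UNIV. (g $ Inl (fst p) * g $ Inr (snd p)) *\<^sub>R pt (fst p) (snd p)) \<in> convex hull Bbar"
  proof (rule convex_sum)
    have "(\<Sum>p\<in>UNIV. g $ Inl (fst p) * g $ Inr (snd p)) = (\<Sum>x\<in>UNIV. \<Sum>y\<in>UNIV. g $ Inl x * g $ Inr y)"
      by (rule sum_pairs)
    also have "\<dots> = sl UNIV g * sr UNIV g" by (simp add: sl_def sr_def sum_product)
    finally show "(\<Sum>p\<in>UNIV. g $ Inl (fst p) * g $ Inr (snd p)) = 1" using L R by simp
  qed (use assms in \<open>auto simp: Bbar_pt intro!: hull_inc\<close>)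
  thus ?thesis using decomp[OF assms(1)] by simp
qed


lemma relint_pos:
  assumes "f \<in> rel_interior (convex hull (Bbar :: (real ^ ('a::finite + 'a)) set))"
  shows "0 < f $ k"
proof (rule ccontr)
  assume neg: "\<not> 0 < f $ k"
  obtain e where e: "e > 0" and fc: "f \<in> convex hull Bbar"
    and B: "ball f e \<inter> affine hull (convex hull Bbar) \<subseteq> convex hull (Bbar :: (real ^ ('a + 'a)) set)"
    using assms mem_rel_interior_ball by blast
  obtain a where a: "k = Inl a \<or> k = Inr a" by (cases k) auto
  define p :: "real ^ ('a + 'a)" where "p = pt a a"
  have p1: "p $ k = 1" using a by (auto simp: p_def pt_nth)
  have pB: "p \<in> affine hull Bbar" unfolding p_def Bbar_pt by (rule hull_inc) auto
  have fA: "f \<in> affine hull Bbar" using fc convex_hull_subset_affine_hull by blast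
  define t where "t = e / (2 * (norm (f - p) + 1))"
  have t0: "t > 0" unfolding t_def by (rule divide_pos_pos[OF e]) (smt (verit) norm_ge_zero)
  define g where "g = (1 + t) *\<^sub>R f + (- t) *\<^sub>R p"
  have gA: "g \<in> affine hull Bbar" unfolding g_def
    by (rule mem_affine[OF affine_affine_hull fA pB]) simp
  have "g - f = t *\<^sub>R (f - p)" by (simp add: g_def algebra_simps)
  hence "dist f g = t * norm (f - p)" using t0 by (simp add: dist_norm norm_minus_commute[of f g])
  also have "\<dots> < e"
  proof -
    have "t * norm (f - p) = e * (norm (f - p) / (2 * (norm (f - p) + 1)))" by (simp add: t_def)
    also have "\<dots> < e * 1"
      proof (rule mult_strict_left_mono[OF _ e])
      have n: "0 \<le> norm (f - p)" by simp
      hence d: "0 < 2 * (norm (f - p) + 1)" by (smt (verit))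
      have "norm (f - p) < 1 * (2 * (norm (f - p) + 1))" using n by (smt (verit))
      thus "norm (f - p) / (2 * (norm (f - p) + 1)) < 1" using d by (subst divide_less_eq) simp
    qed
    finally show ?thesis by simp
  qed
  finally have "g \<in> ball f e" by simp
  with gA B have "g \<in> convex hull Bbar" by auto
  hence "0 \<le> g $ k" using conv_nonneg by blast
  moreover have "g $ k = (1 + t) * f $ k - t" using p1 by (simp add: g_def)
  moreover have "(1 + t) * f $ k \<le> 0" using neg t0 by (simp add: mult_nonneg_nonpos)
  ultimately show False using t0 by linarith
qed

lemma pos_relint:
  assumes "f \<in> AFF" "\<forall>k. 0 < f $ k"
  shows "f \<in> rel_interior (convex hull (Bbar :: (real ^ ('a::finite + 'a)) set))"
proof -
  define T :: "(real ^ ('a + 'a)) set" where "T = (\<Inter>k\<in>UNIV. {g. g $ k > 0})"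
  have oT: "open T" unfolding T_def by (intro open_INT finite ballI open_halfspace_component_gt_cart)
  have fT: "f \<in> T" using assms by (simp add: T_def)
  have fC: "f \<in> convex hull Bbar" using assms by (intro AFF_nonneg_conv) (auto simp: less_imp_le)
  have "T \<inter> affine hull (convex hull Bbar) \<subseteq> convex hull Bbar"
  proof
    fix g assume "g \<in> T \<inter> affine hull (convex hull Bbar)"
    hence "g \<in> AFF" "\<forall>k. 0 \<le> g $ k" using aff_sub by (auto simp: T_def less_imp_le)
    thus "g \<in> convex hull Bbar" by (rule AFF_nonneg_conv)
  qed
  thus ?thesis using oT fT fC mem_rel_interior by blast
qed

lemma witness_relint:
  assumes K: "convex K"
    and W: "\<forall>k. \<exists>w \<in> convex hull (Bbar :: (real ^ ('a::finite + 'a)) set) \<inter> K. 0 < w $ k"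
  shows "\<exists>f \<in> K. f \<in> rel_interior (convex hull (Bbar :: (real ^ ('a + 'a)) set))"
proof -
  obtain w where w: "\<And>k. w k \<in> convex hull (Bbar :: (real ^ ('a + 'a)) set) \<inter> K \<and> 0 < w k $ k"
    using W by metis
  define c :: real where "c = real CARD('a + 'a)"
  have c0: "c > 0" by (simp add: c_def)
  define f where "f = (\<Sum>k\<in>UNIV. (1 / c) *\<^sub>R w k)"
  have fK: "f \<in> convex hull Bbar \<inter> K" unfolding f_def
  proof (rule convex_sum)
    show "convex (convex hull Bbar \<inter> K)" using K by (simp add: convex_Int)
    show "(\<Sum>i\<in>(UNIV::('a+'a) set). 1 / c) = 1" using c0 by (simp add: c_def)
  qed (use w c0 in auto)
  have pos: "0 < f $ j" for j
  proof -
    have "f $ j = (\<Sum>k\<in>UNIV. (1 / c) * w k $ j)" by (simp add: f_def sum_component)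
    also have "\<dots> > 0"
    proof (rule sum_pos2[of UNIV j])
      show "0 < 1 / c * w j $ j" using w c0 by simp
      fix i :: "'a + 'a"
      have "w i \<in> convex hull Bbar" using w by blast
      hence "0 \<le> w i $ j" using conv_nonneg by blast
      thus "0 \<le> 1 / c * w i $ j" using c0 by simp
    qed auto
    finally show ?thesis .
  qed
  have "f \<in> AFF" using fK convex_hull_subset_affine_hull aff_sub by blast
  thus ?thesis using pos pos_relint fK by blast
qed


lemma T_alt: "T_split S = {f \<in> affine hull Bbar. sl (fst S) f = sr (snd S) f}"
  by (simp add: T_split_def sl_def sr_def)

lemma pt_aff: "pt x y \<in> affine hull Bbar"
  unfolding Bbar_pt by (rule hull_inc) auto

lemma pt_conv: "pt x y \<in> convex hull Bbar"
  unfolding Bbar_pt by (rule hull_inc) auto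

lemma pt_T: "pt x y \<in> T_split S \<longleftrightarrow> (x \<in> fst S \<longleftrightarrow> y \<in> snd S)"
  by (simp add: T_alt pt_aff sl_pt sr_pt)

lemma convex_T: "convex (T_split S)"
proof -
  have "convex {f::real^('a+'a). sl (fst S) f = sr (snd S) f}"
    unfolding convex_def by (simp add: sl_lin sr_lin)
  moreover have "T_split S = affine hull Bbar \<inter> {f. sl (fst S) f = sr (snd S) f}"
    by (auto simp: T_alt)
  ultimately show ?thesis by (simp add: convex_Int affine_imp_convex)
qed

lemma T_compl: "T_split (- A, - B) = T_split (A, B)"
proof -
  have "sl (-A) f = sr (-B) f \<longleftrightarrow> sl A f = sr B f" if "f \<in> affine hull Bbar" for f
    using that aff_sub by (auto simp: sl_compl sr_compl AFF_def)
  thus ?thesis by (auto simp: T_alt)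
qed

lemma sl_mono: "E \<subseteq> F \<Longrightarrow> \<forall>k. 0 < f $ k \<Longrightarrow> sl E f \<le> sl F f"
  unfolding sl_def by (rule sum_mono2) (auto simp: less_imp_le)
lemma sr_mono: "E \<subseteq> F \<Longrightarrow> \<forall>k. 0 < f $ k \<Longrightarrow> sr E f \<le> sr F f"
  unfolding sr_def by (rule sum_mono2) (auto simp: less_imp_le)

lemma sl_eq: assumes "E \<subseteq> F" "\<forall>k. 0 < f $ k" "sl E f = sl F f" shows "E = F"
proof (rule ccontr)
  assume "E \<noteq> F"
  then obtain z where z: "z \<in> F - E" using assms(1) by blast
  have "sl F f = sl E f + sl (F - E) f" unfolding sl_def
    using assms(1) by (simp add: sum.subset_diff)
  moreover have "0 < sl (F - E) f" unfolding sl_def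
    by (rule sum_pos2[OF _ z]) (use assms(2) in \<open>auto simp: less_imp_le\<close>)
  ultimately show False using assms(3) by simp
qed
lemma sr_eq: assumes "E \<subseteq> F" "\<forall>k. 0 < f $ k" "sr E f = sr F f" shows "E = F"
proof (rule ccontr)
  assume "E \<noteq> F"
  then obtain z where z: "z \<in> F - E" using assms(1) by blast
  have "sr F f = sr E f + sr (F - E) f" unfolding sr_def
    using assms(1) by (simp add: sum.subset_diff)
  moreover have "0 < sr (F - E) f" unfolding sr_def
    by (rule sum_pos2[OF _ z]) (use assms(2) in \<open>auto simp: less_imp_le\<close>)
  ultimately show False using assms(3) by simp
qed

lemma compat_eqT:
  assumes c: "dps_compatible (A, B) (C, D)"
    and fS: "f \<in> T_split (A, B)" and fT: "f \<in> T_split (C, D)"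
    and fR: "f \<in> rel_interior (convex hull Bbar)"
  shows "T_split (A, B) = T_split (C, D)"
proof -
  have pos: "\<forall>k. 0 < f $ k" using fR relint_pos by blast
  have "f \<in> AFF" using fS aff_sub by (auto simp: T_alt)
  hence L: "sl UNIV f = 1" and R: "sr UNIV f = 1" by (auto simp: AFF_def)
  have e1: "sl A f = sr B f" and e2: "sl C f = sr D f" using fS fT by (auto simp: T_alt)
  have cc: "(A \<subseteq> C \<and> D \<subseteq> B) \<or> (A \<subseteq> - C \<and> - D \<subseteq> B) \<or> (C \<subseteq> A \<and> B \<subseteq> D) \<or> (- C \<subseteq> A \<and> B \<subseteq> - D)"
    using c by (auto simp: dps_compatible_def Let_def Compl_eq_Diff_UNIV)
  show ?thesis
  proof -
    { assume h: "A \<subseteq> C" "D \<subseteq> B"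
      have "sl A f \<le> sl C f" "sr D f \<le> sr B f" using sl_mono[OF h(1) pos] sr_mono[OF h(2) pos] by auto
      hence "sl A f = sl C f" "sr D f = sr B f" using e1 e2 by linarith+
      hence "A = C" "D = B" using sl_eq[OF h(1) pos] sr_eq[OF h(2) pos] by auto
      hence ?thesis by simp }
    moreover
    { assume h: "C \<subseteq> A" "B \<subseteq> D"
      have "sl C f \<le> sl A f" "sr B f \<le> sr D f" using sl_mono[OF h(1) pos] sr_mono[OF h(2) pos] by auto
      hence "sl C f = sl A f" "sr B f = sr D f" using e1 e2 by linarith+
      hence "C = A" "B = D" using sl_eq[OF h(1) pos] sr_eq[OF h(2) pos] by auto
      hence ?thesis by simp }
    moreover
    { assume h: "A \<subseteq> - C" "- D \<subseteq> B"
      have "sl A f \<le> sl (- C) f" "sr (- D) f \<le> sr B f" using sl_mono[OF h(1) pos] sr_mono[OF h(2) pos] by auto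
      moreover have "sl (- C) f = 1 - sl C f" "sr (- D) f = 1 - sr D f" using L R by (simp_all add: sl_compl sr_compl)
      ultimately have "sl A f = sl (- C) f" "sr (- D) f = sr B f" using e1 e2 by linarith+
      hence "A = - C" "- D = B" using sl_eq[OF h(1) pos] sr_eq[OF h(2) pos] by auto
      hence ?thesis using T_compl[of C D] by simp }
    moreover
    { assume h: "- C \<subseteq> A" "B \<subseteq> - D"
      have "sl (- C) f \<le> sl A f" "sr B f \<le> sr (- D) f" using sl_mono[OF h(1) pos] sr_mono[OF h(2) pos] by auto
      moreover have "sl (- C) f = 1 - sl C f" "sr (- D) f = 1 - sr D f" using L R by (simp_all add: sl_compl sr_compl)
      ultimately have "sl (- C) f = sl A f" "sr B f = sr (- D) f" using e1 e2 by linarith+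
      hence "- C = A" "B = - D" using sl_eq[OF h(1) pos] sr_eq[OF h(2) pos] by auto
      hence ?thesis using T_compl[of C D] by simp }
    ultimately show ?thesis using cc by blast
  qed
qed


lemma eqT_compat:
  assumes eq: "T_split (A, B) = T_split (C, D)"
    and A: "A \<noteq> {}" and B: "B \<noteq> {}" and AB: "A \<inter> B = {}"
  shows "dps_compatible (A, B) (C, D)"
proof -
  have H: "(x \<in> A \<longleftrightarrow> y \<in> B) \<longleftrightarrow> (x \<in> C \<longleftrightarrow> y \<in> D)" for x y
    using pt_T[of x y "(A, B)"] pt_T[of x y "(C, D)"] eq by simp
  obtain y0 where y0: "y0 \<in> B" using B by blast
  obtain x0 where x0: "x0 \<in> A" using A by blast
  show ?thesis
  proof (cases "y0 \<in> D")
    case True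
    have AC: "A = C" using H[of _ y0] y0 True by blast
    have "B = D" using H[of x0] x0 AC by blast
    thus ?thesis using AC by (simp add: dps_compatible_def)
  next
    case False
    have AC: "A = - C" using H[of _ y0] y0 False by blast
    have "B = - D" using H[of x0] x0 AC by blast
    thus ?thesis using AC by (simp add: dps_compatible_def Compl_eq_Diff_UNIV)
  qed
qed

lemma edge_pts:
  assumes "is_edge Bbar p q"
  shows "\<exists>x y x' y'. p = pt x y \<and> q = pt x' y' \<and> (x = x' \<or> y = y')"
proof -
  have pq: "p \<noteq> q" and F: "closed_segment p q face_of convex hull Bbar"
    using assms by (auto simp: is_edge_def)
  have "p extreme_point_of closed_segment p q" "q extreme_point_of closed_segment p q"
    by (auto simp: extreme_point_of_segment)
  hence "p extreme_point_of convex hull Bbar" "q extreme_point_of convex hull Bbar"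
    using extreme_point_of_face[OF F] by blast+
  hence "p \<in> Bbar" "q \<in> Bbar" using extreme_point_of_convex_hull by blast+
  then obtain x y x' y' where p: "p = pt x y" and q: "q = pt x' y'" by (auto simp: Bbar_pt)
  show ?thesis
  proof (rule ccontr)
    assume "\<not> ?thesis"
    hence xx: "x \<noteq> x'" and yy: "y \<noteq> y'" using p q by auto
    define p' where "p' = pt x y'"
    define q' where "q' = pt x' y"
    have mid: "midpoint p q = midpoint p' q'"
      by (simp add: midpoint_def p q p'_def q'_def pt_def algebra_simps)
    have "p' $ Inl x \<noteq> q' $ Inl x" using xx by (simp add: p'_def q'_def pt_nth)
    hence "p' \<noteq> q'" by auto
    hence m1: "midpoint p q \<in> open_segment p' q'" using mid by simp
    have m2: "midpoint p q \<in> closed_segment p q" by simp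
    have "p' \<in> closed_segment p q"
      using face_ofD[OF F m1 _ _ m2] pt_conv unfolding p'_def q'_def by blast
    then obtain u :: real where u: "p' = (1 - u) *\<^sub>R p + u *\<^sub>R q"
      by (auto simp: in_segment)
    have "p' $ Inl x = ((1 - u) *\<^sub>R p + u *\<^sub>R q) $ Inl x" using u by simp
    hence "u = 0" using xx by (simp add: p'_def p q pt_nth)
    moreover have "p' $ Inr y' = ((1 - u) *\<^sub>R p + u *\<^sub>R q) $ Inr y'" using u by simp
    hence "u = 1" using yy by (simp add: p'_def p q pt_nth)
    ultimately show False by simp
  qed
qed


lemma sum_UNIV_Plus: "(\<Sum>k\<in>(UNIV::('a::finite + 'b::finite) set). F k) = (\<Sum>i\<in>UNIV. F (Inl i)) + (\<Sum>j\<in>UNIV. F (Inr j))"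
  using sum.Plus[of "UNIV::'a set" "UNIV::'b set" F] by (simp add: comp_def)

definition avec :: "'a::finite set \<Rightarrow> 'a set \<Rightarrow> real ^ ('a + 'a)" where
  "avec A B = (\<chi> k. case k of Inl i \<Rightarrow> (if i \<in> A then 1 else 0) | Inr j \<Rightarrow> (if j \<in> B then -1 else 0))"

lemma avec_inner: "avec A B \<bullet> g = sl A g - sr B g"
proof -
  have "avec A B \<bullet> g = (\<Sum>i\<in>UNIV. (if i \<in> A then 1 else 0) * g $ Inl i) + (\<Sum>j\<in>UNIV. (if j \<in> B then -1 else 0) * g $ Inr j)"
    unfolding inner_vec_def sum_UNIV_Plus by (simp add: avec_def)
  also have "\<dots> = (\<Sum>i\<in>UNIV. if i \<in> A then g $ Inl i else 0) + (\<Sum>j\<in>UNIV. if j \<in> B then - g $ Inr j else 0)"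
    by (intro arg_cong2[where f = "(+)"] sum.cong) auto
  also have "\<dots> = sl A g - sr B g"
    by (simp add: sl_def sr_def sum.If_cases sum_negf)
  finally show ?thesis .
qed

lemma split_T:
  assumes A: "A \<noteq> {}" and B: "B \<noteq> {}" and AB: "A \<inter> B = {}"
  shows "is_split Bbar (T_split (A, B))"
  unfolding is_split_def
proof (intro exI conjI)
  show H: "T_split (A, B) = {x \<in> affine hull Bbar. avec A B \<bullet> x = 0}"
    by (auto simp: T_alt avec_inner)
  obtain x0 where x0: "x0 \<in> A" using A by blast
  obtain y0 where y0: "y0 \<in> B" using B by blast
  have "pt x0 x0 \<notin> T_split (A, B)" using x0 AB by (auto simp: pt_T)
  thus "T_split (A, B) \<noteq> affine hull Bbar" using pt_aff by blast
  have "\<exists>f \<in> T_split (A, B). f \<in> rel_interior (convex hull Bbar)"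
  proof (rule witness_relint[OF convex_T], rule allI)
    fix k :: "'a + 'a"
    show "\<exists>w\<in>convex hull Bbar \<inter> T_split (A, B). 0 < w $ k"
    proof (cases k)
      case (Inl x)
      obtain y where "x \<in> A \<longleftrightarrow> y \<in> B" using x0 y0 AB by (cases "x \<in> A") auto
      hence "pt x y \<in> convex hull Bbar \<inter> T_split (A, B)" by (simp add: pt_T pt_conv)
      moreover have "0 < pt x y $ k" by (simp add: Inl pt_nth)
      ultimately show ?thesis by blast
    next
      case (Inr y)
      obtain x where "x \<in> A \<longleftrightarrow> y \<in> B" using x0 y0 AB by (cases "y \<in> B") auto
      hence "pt x y \<in> convex hull Bbar \<inter> T_split (A, B)" by (simp add: pt_T pt_conv)
      moreover have "0 < pt x y $ k" by (simp add: Inr pt_nth)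
      ultimately show ?thesis by blast
    qed
  qed
  thus "T_split (A, B) \<inter> rel_interior (convex hull Bbar) \<noteq> {}" by blast
  show "\<forall>(p :: real ^ ('a + 'a)) q. is_edge Bbar p q \<longrightarrow> \<not> (avec A B \<bullet> p < 0 \<and> 0 < avec A B \<bullet> q)"
  proof (intro allI impI)
    fix p q :: "real ^ ('a + 'a)" assume "is_edge Bbar p q"
    then obtain x y x' y' where "p = pt x y" "q = pt x' y'" "x = x' \<or> y = y'"
      using edge_pts by blast
    thus "\<not> (avec A B \<bullet> p < 0 \<and> 0 < avec A B \<bullet> q)"
      by (auto simp: avec_inner sl_pt sr_pt split: if_splits)
  qed
qed


lemma opp_pair:
  assumes "A \<noteq> {}" "A \<noteq> UNIV" "C \<noteq> {}" "C \<noteq> UNIV"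
  shows "\<exists>x1 x2. (x1 \<in> A \<longleftrightarrow> x2 \<notin> A) \<and> (x1 \<in> C \<longleftrightarrow> x2 \<notin> C)"
proof -
  obtain a a' c c' where "a \<in> A" "a' \<notin> A" "c \<in> C" "c' \<notin> C" using assms by blast
  thus ?thesis by blast
qed

lemma mid_witness:
  assumes "x \<in> A \<longleftrightarrow> x' \<notin> A" "x \<in> C \<longleftrightarrow> x' \<notin> C" "y \<in> B \<longleftrightarrow> y' \<notin> B" "y \<in> D \<longleftrightarrow> y' \<notin> D"
  shows "(1/2) *\<^sub>R pt x y + (1/2) *\<^sub>R pt x' y' \<in> convex hull Bbar \<inter> (T_split (A, B) \<inter> T_split (C, D))"
    and "0 < ((1/2) *\<^sub>R pt x y + (1/2) *\<^sub>R pt x' y' :: real^('a::finite+'a)) $ Inl x"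
    and "0 < ((1/2) *\<^sub>R pt x y + (1/2) *\<^sub>R pt x' y' :: real^('a::finite+'a)) $ Inr y"
proof -
  let ?w = "(1/2) *\<^sub>R pt x y + (1/2) *\<^sub>R pt x' y' :: real^('a+'a)"
  have wc: "?w \<in> convex hull Bbar"
    by (rule convexD[OF convex_convex_hull pt_conv pt_conv]) auto
  hence wa: "?w \<in> affine hull Bbar" using convex_hull_subset_affine_hull by blast
  have "sl A ?w = 1/2" "sr B ?w = 1/2" "sl C ?w = 1/2" "sr D ?w = 1/2"
    using assms by (auto simp: sl_lin sr_lin sl_pt sr_pt)
  thus "?w \<in> convex hull Bbar \<inter> (T_split (A, B) \<inter> T_split (C, D))"
    using wc wa by (simp add: T_alt)
  show "0 < ?w $ Inl x" "0 < ?w $ Inr y" by (auto simp: pt_nth)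
qed

lemma incompat_point:
  assumes A: "A \<noteq> {}" and B: "B \<noteq> {}" and AB: "A \<inter> B = {}"
    and C: "C \<noteq> {}" and D: "D \<noteq> {}" and CD: "C \<inter> D = {}"
    and nc: "\<not> dps_compatible (A, B) (C, D)"
  shows "\<exists>f \<in> T_split (A, B) \<inter> T_split (C, D). f \<in> rel_interior (convex hull Bbar)"
proof -
  have n1: "\<not> (A \<subseteq> C \<and> D \<subseteq> B)" and n2: "\<not> (A \<subseteq> - C \<and> - D \<subseteq> B)"
    and n3: "\<not> (C \<subseteq> A \<and> B \<subseteq> D)" and n4: "\<not> (- C \<subseteq> A \<and> B \<subseteq> - D)"
    using nc by (auto simp: dps_compatible_def Let_def Compl_eq_Diff_UNIV)
  have AU: "A \<noteq> UNIV" using B AB by blast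
  have BU: "B \<noteq> UNIV" using A AB by blast
  have CU: "C \<noteq> UNIV" using D CD by blast
  have DU: "D \<noteq> UNIV" using C CD by blast
  obtain x1 x2 where xp: "x1 \<in> A \<longleftrightarrow> x2 \<notin> A" "x1 \<in> C \<longleftrightarrow> x2 \<notin> C"
    using opp_pair[OF A AU C CU] by blast
  obtain y1 y2 where yp: "y1 \<in> B \<longleftrightarrow> y2 \<notin> B" "y1 \<in> D \<longleftrightarrow> y2 \<notin> D"
    using opp_pair[OF B BU D DU] by blast
  show ?thesis
  proof (rule witness_relint[OF convex_Int[OF convex_T convex_T]], rule allI)
    fix k :: "'a + 'a"
    show "\<exists>w\<in>convex hull Bbar \<inter> (T_split (A, B) \<inter> T_split (C, D)). 0 < w $ k"
    proof (cases k)
      case (Inl x)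
      show ?thesis
      proof (cases "\<exists>y. (y \<in> B \<longleftrightarrow> x \<in> A) \<and> (y \<in> D \<longleftrightarrow> x \<in> C)")
        case True
        then obtain y where y: "(y \<in> B \<longleftrightarrow> x \<in> A) \<and> (y \<in> D \<longleftrightarrow> x \<in> C)" by blast
        hence "pt x y \<in> convex hull Bbar \<inter> (T_split (A, B) \<inter> T_split (C, D))"
          by (simp add: pt_T pt_conv)
        moreover have "0 < pt x y $ k" by (simp add: Inl pt_nth)
        ultimately show ?thesis by blast
      next
        case False
        have "\<exists>x'. (x \<in> A \<longleftrightarrow> x' \<notin> A) \<and> (x \<in> C \<longleftrightarrow> x' \<notin> C)"
        proof (cases "x \<in> A"; cases "x \<in> C")
          assume "x \<in> A" "x \<in> C" thus ?thesis using False n4 by blast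
        next
          assume "x \<in> A" "x \<notin> C" thus ?thesis using False n3 by blast
        next
          assume "x \<notin> A" "x \<in> C" thus ?thesis using False n1 by blast
        next
          assume "x \<notin> A" "x \<notin> C" thus ?thesis using False n2 by blast
        qed
        then obtain x' where "(x \<in> A \<longleftrightarrow> x' \<notin> A)" "(x \<in> C \<longleftrightarrow> x' \<notin> C)" by blast
        from mid_witness[OF this yp] show ?thesis using Inl by blast
      qed
    next
      case (Inr y)
      show ?thesis
      proof (cases "\<exists>x. (x \<in> A \<longleftrightarrow> y \<in> B) \<and> (x \<in> C \<longleftrightarrow> y \<in> D)")
        case True
        then obtain x where x: "(x \<in> A \<longleftrightarrow> y \<in> B) \<and> (x \<in> C \<longleftrightarrow> y \<in> D)" by blast
        hence "pt x y \<in> convex hull Bbar \<inter> (T_split (A, B) \<inter> T_split (C, D))"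
          by (simp add: pt_T pt_conv)
        moreover have "0 < pt x y $ k" by (simp add: Inr pt_nth)
        ultimately show ?thesis by blast
      next
        case False
        have "\<exists>y'. (y \<in> B \<longleftrightarrow> y' \<notin> B) \<and> (y \<in> D \<longleftrightarrow> y' \<notin> D)"
        proof (cases "y \<in> B"; cases "y \<in> D")
          assume "y \<in> B" "y \<in> D" thus ?thesis using False n2 by blast
        next
          assume "y \<in> B" "y \<notin> D" thus ?thesis using False n1 by blast
        next
          assume "y \<notin> B" "y \<in> D" thus ?thesis using False n3 by blast
        next
          assume "y \<notin> B" "y \<notin> D" thus ?thesis using False n4 by blast
        qed
        then obtain y' where "(y \<in> B \<longleftrightarrow> y' \<notin> B)" "(y \<in> D \<longleftrightarrow> y' \<notin> D)" by blast
        from mid_witness[OF xp this] show ?thesis using Inr by blast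
      qed
    qed
  qed
qed


theorem mainTheorem5:
  fixes SS :: "('a::finite set \<times> 'a set) set"
  assumes "CARD('a) \<ge> 2"
    and "\<forall>S\<in>SS. dir_partial_split S"
  shows "dps_set_compatible SS \<longleftrightarrow>
         compatible_split_system (Bbar :: (real ^ ('a + 'a)) set) (T_split ` SS)"
proof
  assume comp: "dps_set_compatible SS"
  show "compatible_split_system (Bbar :: (real ^ ('a + 'a)) set) (T_split ` SS)"
    unfolding compatible_split_system_def
  proof (intro conjI ballI impI)
    fix H assume "H \<in> T_split ` SS"
    then obtain A B where S: "(A, B) \<in> SS" and H: "H = T_split (A, B)" by auto
    have "dir_partial_split (A, B)" using assms(2) S by blast
    hence "A \<noteq> {}" "B \<noteq> {}" "A \<inter> B = {}" by (simp_all add: dir_partial_split_def)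
    thus "is_split Bbar H" using H split_T by blast
  next
    fix H1 H2 assume "H1 \<in> T_split ` SS" "H2 \<in> T_split ` SS" and ne: "H1 \<noteq> H2"
    then obtain A B C D where S: "(A, B) \<in> SS" and H1: "H1 = T_split (A, B)"
      and T: "(C, D) \<in> SS" and H2: "H2 = T_split (C, D)" by auto
    have c: "dps_compatible (A, B) (C, D)" using comp S T by (simp add: dps_set_compatible_def)
    show "H1 \<inter> H2 \<inter> rel_interior (convex hull Bbar) = {}"
    proof (rule ccontr)
      assume "H1 \<inter> H2 \<inter> rel_interior (convex hull Bbar) \<noteq> {}"
      then obtain f where "f \<in> H1" "f \<in> H2" "f \<in> rel_interior (convex hull Bbar)" by blast
      hence "H1 = H2" using compat_eqT[OF c] H1 H2 by blast
      thus False using ne by simp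
    qed
  qed
next
  assume sys: "compatible_split_system (Bbar :: (real ^ ('a + 'a)) set) (T_split ` SS)"
  show "dps_set_compatible SS"
    unfolding dps_set_compatible_def
  proof (intro ballI)
    fix S T assume S: "S \<in> SS" and T: "T \<in> SS"
    obtain A B where AB: "S = (A, B)" by fastforce
    obtain C D where CD: "T = (C, D)" by fastforce
    have "dir_partial_split (A, B)" using assms(2) S AB by blast
    hence d1: "A \<noteq> {}" "B \<noteq> {}" "A \<inter> B = {}" by (simp_all add: dir_partial_split_def)
    have "dir_partial_split (C, D)" using assms(2) T CD by blast
    hence d2: "C \<noteq> {}" "D \<noteq> {}" "C \<inter> D = {}" by (simp_all add: dir_partial_split_def)
    show "dps_compatible S T"
    proof (rule ccontr)
      assume nc: "\<not> dps_compatible S T"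
      show False
      proof (cases "T_split (A, B) = (T_split (C, D) :: (real ^ ('a + 'a)) set)")
        case True
        thus False using eqT_compat[OF True d1] nc AB CD by simp
      next
        case False
        obtain f :: "real ^ ('a + 'a)" where "f \<in> T_split (A, B) \<inter> T_split (C, D)"
          "f \<in> rel_interior (convex hull Bbar)"
          using incompat_point[OF d1 d2] nc AB CD by blast
        moreover have "T_split (A, B) \<inter> T_split (C, D) \<inter> rel_interior (convex hull (Bbar :: (real ^ ('a + 'a)) set)) = {}"
          using sys False S T AB CD unfolding compatible_split_system_def by blast
        ultimately show False by blast
      qed
    qed
  qed
qed

end
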